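(* Let $X$ be a rearrangement invariant space on $[0,1]$ which is an interpolation space between $L^1([0,1])$ and $L^\infty([0,1])$, and let $(w_{n_k})$ be a $q$-lacunary sequence of Walsh functions with $q>1$. Then $(w_{n_k})$ is a basic sequence in $X$, i.e. there is a constant $K>0$ such that $\|\sum_{k=1}^Ma_kw_{n_k}\|_X\le K\|\sum_{k=1}^Na_kw_{n_k}\|_X$ for all $M<N$ and all real $a_1,\dots,a_N$.
   Context: $m$ is Lebesgue measure. A Banach function space $X$ over $[0,1]$ is a linear space of measurable functions with a complete norm such that $g\in X$, $|f|\le|g|$ a.e. imply $f\in X$, $\|f\|_X\le\|g\|_X$; it is rearrangement invariant (r.i.) if equimeasurable functions have equal norms (and membership). $X$ is an interpolation space between $L^1$ and $L^\infty$ if $L^\infty\subset X\subset L^1$ continuously and every linear operator bounded on $L^1$ and on $L^\infty$ is bounded on $X$. Rademacher functions $r_k(t)=\mathrm{sign}\sin(2^k\pi t)$; Walsh functions (Paley numbering) $w_0=1$, $w_k=r_1^{a_1}\cdots r_n^{a_n}$ for $k=\sum_{i=1}^na_i2^{i-1}$, $a_i\in\{0,1\}$. $(w_{n_k})$ is $q$-lacunary if $n_{k+1}/n_k\ge q$ for all $k$. *)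

theory Defs
  imports "HOL-Analysis.Analysis"
begin

abbreviation I01 :: "real measure" where
  "I01 \<equiv> lebesgue_on {0..1}"

text \<open>A function space is given by a set X of functions and a norm nrm on it.
  Banach function space over [0,1] (norm is on functions, a.e.-equal functions get equal
  norm by the lattice property).\<close>
definition banach_function_space :: "(real \<Rightarrow> real) set \<Rightarrow> ((real \<Rightarrow> real) \<Rightarrow> real) \<Rightarrow> bool" where
  "banach_function_space X nrm \<longleftrightarrow>
     X \<subseteq> borel_measurable I01 \<and>
     (\<lambda>_. 0) \<in> X \<and>
     (\<forall>f\<in>X. \<forall>g\<in>X. (\<lambda>x. f x + g x) \<in> X) \<and>
     (\<forall>c. \<forall>f\<in>X. (\<lambda>x. c * f x) \<in> X) \<and>
     (\<forall>f\<in>X. 0 \<le> nrm f) \<and>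
     (\<forall>f\<in>X. nrm f = 0 \<longleftrightarrow> (AE x in I01. f x = 0)) \<and>
     (\<forall>f\<in>X. \<forall>g\<in>X. nrm (\<lambda>x. f x + g x) \<le> nrm f + nrm g) \<and>
     (\<forall>c. \<forall>f\<in>X. nrm (\<lambda>x. c * f x) = \<bar>c\<bar> * nrm f) \<and>
     (\<forall>f g. g \<in> X \<and> f \<in> borel_measurable I01 \<and> (AE x in I01. \<bar>f x\<bar> \<le> \<bar>g x\<bar>)
            \<longrightarrow> f \<in> X \<and> nrm f \<le> nrm g) \<and>
     (\<forall>u :: nat \<Rightarrow> real \<Rightarrow> real. (\<forall>n. u n \<in> X) \<and>
          (\<forall>e>0. \<exists>K. \<forall>m\<ge>K. \<forall>n\<ge>K. nrm (\<lambda>x. u m x - u n x) < e)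
        \<longrightarrow> (\<exists>f\<in>X. (\<lambda>n. nrm (\<lambda>x. u n x - f x)) \<longlonglongrightarrow> 0))"

definition equimeasurable :: "(real \<Rightarrow> real) \<Rightarrow> (real \<Rightarrow> real) \<Rightarrow> bool" where
  "equimeasurable f g \<longleftrightarrow>
     (\<forall>t. measure I01 {x \<in> {0..1}. \<bar>f x\<bar> > t} = measure I01 {x \<in> {0..1}. \<bar>g x\<bar> > t})"

definition rearrangement_invariant :: "(real \<Rightarrow> real) set \<Rightarrow> ((real \<Rightarrow> real) \<Rightarrow> real) \<Rightarrow> bool" where
  "rearrangement_invariant X nrm \<longleftrightarrow>
     banach_function_space X nrm \<and>
     (\<forall>f g. f \<in> borel_measurable I01 \<and> g \<in> borel_measurable I01 \<and> equimeasurable f g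
        \<longrightarrow> (f \<in> X \<longleftrightarrow> g \<in> X) \<and> (f \<in> X \<longrightarrow> nrm f = nrm g))"

definition ess_bdd :: "(real \<Rightarrow> real) \<Rightarrow> real \<Rightarrow> bool" where
  "ess_bdd f c \<longleftrightarrow> (AE x in I01. \<bar>f x\<bar> \<le> c)"

definition L1norm :: "(real \<Rightarrow> real) \<Rightarrow> real" where
  "L1norm f = (\<integral>x. \<bar>f x\<bar> \<partial>I01)"

text \<open>A linear operator on L1 = L1 + L-infinity that is bounded on L1 and on L-infinity.\<close>
definition bounded_L1_Linf_operator :: "((real \<Rightarrow> real) \<Rightarrow> (real \<Rightarrow> real)) \<Rightarrow> bool" where
  "bounded_L1_Linf_operator T \<longleftrightarrow>
     (\<forall>f. integrable I01 f \<longrightarrow> integrable I01 (T f)) \<and>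
     (\<forall>a b f g. integrable I01 f \<and> integrable I01 g \<longrightarrow>
        (AE x in I01. T (\<lambda>y. a * f y + b * g y) x = a * T f x + b * T g x)) \<and>
     (\<exists>C. \<forall>f. integrable I01 f \<longrightarrow> L1norm (T f) \<le> C * L1norm f) \<and>
     (\<exists>C. \<forall>f c. f \<in> borel_measurable I01 \<and> ess_bdd f c \<longrightarrow> ess_bdd (T f) (C * c))"

definition interpolation_space_L1_Linf :: "(real \<Rightarrow> real) set \<Rightarrow> ((real \<Rightarrow> real) \<Rightarrow> real) \<Rightarrow> bool" where
  "interpolation_space_L1_Linf X nrm \<longleftrightarrow>
     (\<exists>C. \<forall>f c. f \<in> borel_measurable I01 \<and> ess_bdd f c \<longrightarrow> f \<in> X \<and> nrm f \<le> C * c) \<and>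
     (\<exists>C. \<forall>f\<in>X. integrable I01 f \<and> L1norm f \<le> C * nrm f) \<and>
     (\<forall>T. bounded_L1_Linf_operator T \<longrightarrow>
        (\<exists>C. \<forall>f\<in>X. T f \<in> X \<and> nrm (T f) \<le> C * nrm f))"

definition rademacher :: "nat \<Rightarrow> real \<Rightarrow> real" where
  "rademacher k t = sgn (sin (2 ^ k * pi * t))"

definition walsh :: "nat \<Rightarrow> real \<Rightarrow> real" where
  "walsh n t = (\<Prod>i<n. if bit n i then rademacher (Suc i) t else 1)"

definition lacunary :: "real \<Rightarrow> (nat \<Rightarrow> nat) \<Rightarrow> bool" where
  "lacunary q n \<longleftrightarrow> (\<forall>k\<ge>1. real (n (Suc k)) / real (n k) \<ge> q)"

end

theory Submission
  imports Defs
begin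


definition sd :: "'a set \<Rightarrow> 'a set \<Rightarrow> 'a set" where
  "sd A B = (A - B) \<union> (B - A)"

lemma sd_sd: "sd (sd A B) B = A"
  by (auto simp: sd_def)

lemma sd_parity:
  assumes "finite A" "finite B"
  shows "(-1::real) ^ card (sd A B) = (-1) ^ card A * (-1) ^ card B"
proof -
  have a: "card A = card (A - B) + card (A \<inter> B)"
  proof -
    have "A = (A - B) \<union> (A \<inter> B)" by auto
    then have "card A = card ((A - B) \<union> (A \<inter> B))" by simp
    also have "\<dots> = card (A - B) + card (A \<inter> B)" using assms by (intro card_Un_disjoint) auto
    finally show ?thesis .
  qed
  have b: "card B = card (B - A) + card (A \<inter> B)"
  proof -
    have "B = (B - A) \<union> (A \<inter> B)" by auto
    then have "card B = card ((B - A) \<union> (A \<inter> B))" by simp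
    also have "\<dots> = card (B - A) + card (A \<inter> B)" using assms by (intro card_Un_disjoint) auto
    finally show ?thesis .
  qed
  have c: "card (sd A B) = card (A - B) + card (B - A)"
    unfolding sd_def using assms by (subst card_Un_disjoint) auto
  have "(-1::real) ^ card A * (-1) ^ card B = (-1) ^ (card (A - B) + card (B - A) + 2 * card (A \<inter> B))"
    by (simp add: a b power_add power_mult)
  also have "\<dots> = (-1) ^ card (sd A B)" by (simp add: c power_add power_mult)
  finally show ?thesis by simp
qed

lemma char_orth:
  assumes "finite U" "finite C"
  shows "(\<Sum>J\<in>Pow U. (-1::real) ^ card (C \<inter> J)) = (if C \<inter> U = {} then 2 ^ card U else 0)"
proof (cases "C \<inter> U = {}")
  case True
  then have "\<And>J. J \<in> Pow U \<Longrightarrow> C \<inter> J = {}" by auto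
  then have "(\<Sum>J\<in>Pow U. (-1::real) ^ card (C \<inter> J)) = (\<Sum>J\<in>Pow U. 1)" by simp
  also have "\<dots> = 2 ^ card U" using assms by (simp add: card_Pow)
  finally show ?thesis using True by simp
next
  case False
  then obtain b where b: "b \<in> C" "b \<in> U" by auto
  let ?S = "(\<Sum>J\<in>Pow U. (-1::real) ^ card (C \<inter> J))"
  have "?S = (\<Sum>J\<in>Pow U. (-1::real) ^ card (C \<inter> sd J {b}))"
    by (rule sum.reindex_bij_witness[of _ "\<lambda>J. sd J {b}" "\<lambda>J. sd J {b}"]) (auto simp: sd_sd, auto simp: sd_def b)
  also have "\<dots> = (\<Sum>J\<in>Pow U. - ((-1::real) ^ card (C \<inter> J)))"
  proof (rule sum.cong[OF refl])
    fix J assume J: "J \<in> Pow U"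
    have "C \<inter> sd J {b} = sd (C \<inter> J) {b}" using b by (auto simp: sd_def)
    then show "(-1::real) ^ card (C \<inter> sd J {b}) = - ((-1::real) ^ card (C \<inter> J))"
      using sd_parity[of "C \<inter> J" "{b}"] assms by simp
  qed
  also have "\<dots> = - ?S" by (simp add: sum_negf)
  finally have "?S = 0" by simp
  then show ?thesis using False by simp
qed



definition idx :: "nat \<Rightarrow> real \<Rightarrow> nat" where
  "idx R t = nat \<lfloor>2 ^ R * t\<rfloor>"

definition dx :: "nat \<Rightarrow> nat \<Rightarrow> nat set" where
  "dx R x = {i. i < R \<and> bit x (R - 1 - i)}"

lemma sin_sign_aux:
  fixes D :: nat and th :: real
  assumes "0 < th" "th < 1"
  shows "sgn (sin (pi * (real D + th))) = (if odd D then -1 else 1)"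
proof -
  have s: "sin (pi * th) > 0" using assms by (intro sin_gt_zero) auto
  show ?thesis
  proof (cases "odd D")
    case True
    then obtain Q where Q: "D = 2 * Q + 1" by (metis oddE)
    have "pi * (real D + th) = (pi * th + pi) + of_int (int Q) * (2 * pi)"
      by (simp add: Q algebra_simps)
    moreover have "sin ((pi * th + pi) + of_int (int Q) * (2 * pi)) = sin (pi * th + pi)"
      using sin.plus_of_int[where 'a=real, of "pi * th + pi" "int Q"] by simp
    ultimately have "sin (pi * (real D + th)) = - sin (pi * th)" by simp
    then show ?thesis using s True by simp
  next
    case False
    then obtain Q where Q: "D = 2 * Q" by (metis evenE)
    have "pi * (real D + th) = pi * th + of_int (int Q) * (2 * pi)"
      by (simp add: Q algebra_simps)
    moreover have "sin (pi * th + of_int (int Q) * (2 * pi)) = sin (pi * th)"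
      using sin.plus_of_int[where 'a=real, of "pi * th" "int Q"] by simp
    ultimately have "sin (pi * (real D + th)) = sin (pi * th)" by simp
    then show ?thesis using s False by simp
  qed
qed

lemma rad_idx:
  assumes t: "0 \<le> t" and nz: "2 ^ R * t \<notin> \<int>" and i: "i < R"
  shows "rademacher (Suc i) t = (if bit (idx R t) (R - 1 - i) then -1 else 1)"
proof -
  define y where "y = 2 ^ R * t"
  define x where "x = idx R t"
  define p where "p = R - 1 - i"
  have R: "R = Suc i + p" using i by (simp add: p_def)
  have y0: "0 \<le> y" using t by (simp add: y_def)
  have xf: "real x = of_int \<lfloor>y\<rfloor>" using y0 by (simp add: x_def idx_def y_def)
  have xy: "real x < y"
  proof -
    have "real x \<le> y" using xf by simp
    moreover have "real x \<noteq> y" using nz xf by (metis Ints_of_int y_def)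
    ultimately show ?thesis by simp
  qed
  have yx: "y < real x + 1" using xf by linarith
  define D where "D = x div 2 ^ p"
  define r where "r = x mod 2 ^ p"
  have xd: "x = D * 2 ^ p + r" using div_mult_mod_eq[of x "2^p"] by (simp add: D_def r_def)
  have rl: "r + 1 \<le> 2 ^ p" unfolding r_def
    by (metis Suc_eq_plus1 Suc_leI mod_less_divisor zero_less_numeral zero_less_power)
  have rl': "real r + 1 \<le> 2 ^ p" using rl by (metis of_nat_add of_nat_le_iff of_nat_numeral of_nat_power of_nat_1)
  define th where "th = (real r + (y - real x)) / 2 ^ p"
  have th0: "0 < th" unfolding th_def using xy by (intro divide_pos_pos) auto
  have th1: "th < 1" unfolding th_def using xy yx rl' by (simp add: divide_less_eq)
  have "2 ^ Suc i * pi * t = pi * (y / 2 ^ p)"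
    by (simp add: y_def R power_add)
  also have "y / 2 ^ p = real D + th"
  proof -
    have "real x = real D * 2 ^ p + real r" using xd by (metis of_nat_add of_nat_mult of_nat_numeral of_nat_power)
    then show ?thesis unfolding th_def by (simp add: field_simps)
  qed
  finally have e: "2 ^ Suc i * pi * t = pi * (real D + th)" .
  have "rademacher (Suc i) t = (if odd D then -1 else 1)"
    unfolding rademacher_def e using sin_sign_aux[OF th0 th1] by simp
  also have "odd D \<longleftrightarrow> bit x p" by (simp add: D_def bit_nat_def)
  finally show ?thesis by (simp add: x_def p_def)
qed


lemma bit_ge_false: "(x::nat) < 2 ^ R \<Longrightarrow> R \<le> p \<Longrightarrow> \<not> bit x p"
proof -
  assume "x < 2 ^ R" "R \<le> p"
  then have "x < 2 ^ p" by (metis order_less_le_trans one_le_numeral power_increasing)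
  then show ?thesis by (simp add: bit_nat_def)
qed

lemma bit_lt: "bit (n::nat) i \<Longrightarrow> i < n"
proof -
  assume "bit n i"
  then have "odd (n div 2 ^ i)" by (simp add: bit_nat_def)
  then have "n div 2 ^ i \<noteq> 0" by (metis even_zero)
  then have "2 ^ i \<le> n" by (metis div_less not_le)
  moreover have "i < 2 ^ i" by (rule less_exp)
  ultimately show ?thesis by linarith
qed

lemma prod_if_const:
  assumes "finite A"
  shows "(\<Prod>i\<in>A. if P i then (c::real) else 1) = c ^ card {i\<in>A. P i}"
  using prod.inter_filter[OF assms, of "\<lambda>_. c" P] by simp

lemma walsh_dx:
  assumes n: "n < 2 ^ R" and t: "0 \<le> t" and nz: "2 ^ R * t \<notin> \<int>"
  shows "walsh n t = (-1) ^ card ({i. bit n i} \<inter> dx R (idx R t))"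
proof -
  have "walsh n t = (\<Prod>i<n. if i \<in> {i. bit n i} \<inter> dx R (idx R t) then -1 else 1)"
    unfolding walsh_def
  proof (rule prod.cong[OF refl])
    fix i assume "i \<in> {..<n}"
    show "(if bit n i then rademacher (Suc i) t else 1) =
          (if i \<in> {i. bit n i} \<inter> dx R (idx R t) then - 1 else 1)"
    proof (cases "bit n i")
      case True
      then have "i < R" using bit_ge_false[OF n] by (meson not_le)
      then show ?thesis using True rad_idx[OF t nz, of i] by (simp add: dx_def)
    qed simp
  qed
  also have "\<dots> = (-1) ^ card {i\<in>{..<n}. i \<in> {i. bit n i} \<inter> dx R (idx R t)}"
    by (rule prod_if_const) simp
  also have "{i\<in>{..<n}. i \<in> {i. bit n i} \<inter> dx R (idx R t)} = {i. bit n i} \<inter> dx R (idx R t)"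
    using bit_lt by auto
  finally show ?thesis .
qed

lemma dx_bij: "bij_betw (dx R) {..<2 ^ R} (Pow {..<R})"
proof -
  have inj: "inj_on (dx R) {..<2 ^ R}"
  proof (rule inj_onI)
    fix x y assume x: "x \<in> {..<2 ^ R}" and y: "y \<in> {..<2 ^ R}" and e: "dx R x = dx R y"
    show "x = y"
    proof (rule bit_eqI)
      fix p
      show "bit x p = bit y p"
      proof (cases "p < R")
        case True
        have "R - 1 - p \<in> dx R x \<longleftrightarrow> R - 1 - p \<in> dx R y" using e by simp
        moreover have "R - 1 - (R - 1 - p) = p" using True by simp
        ultimately show ?thesis using True by (simp add: dx_def)
      next
        case False
        then show ?thesis using bit_ge_false x y by auto
      qed
    qed
  qed
  have sub: "dx R ` {..<2 ^ R} \<subseteq> Pow {..<R}" by (auto simp: dx_def)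
  have "card (dx R ` {..<2 ^ R}) = card (Pow {..<R})"
    using card_image[OF inj] by (simp add: card_Pow)
  then have "dx R ` {..<2 ^ R} = Pow {..<R}"
    using sub by (intro card_subset_eq) auto
  then show ?thesis using inj by (simp add: bij_betw_def)
qed



lemma I01_sets: "A \<subseteq> {0..1} \<Longrightarrow> A \<in> sets lebesgue \<Longrightarrow> A \<in> sets I01"
  by (simp add: sets_restrict_space_iff)

lemma I01_measure: "A \<subseteq> {0..1} \<Longrightarrow> measure I01 A = measure lebesgue A"
  by (simp add: measure_restrict_space)

lemma countable_null_I01:
  assumes "countable N" "N \<subseteq> {0..1}"
  shows "N \<in> null_sets I01"
proof -
  have "N \<in> null_sets lebesgue" using assms(1) by (intro null_sets_completionI countable_imp_null_set_lborel)
  then show ?thesis using assms by (simp add: null_sets_restrict_space)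
qed

lemma AE_nondyadic: "AE t in I01. 2 ^ R * t \<notin> \<int>"
proof (rule AE_I')
  let ?N = "{t\<in>{0..1::real}. 2 ^ R * t \<in> \<int>}"
  have "?N \<subseteq> (\<lambda>z. of_int z / 2 ^ R) ` UNIV"
  proof
    fix t assume "t \<in> ?N"
    then obtain z where "2 ^ R * t = of_int z" by (auto elim: Ints_cases)
    then have "t = of_int z / 2 ^ R" by (simp add: field_simps)
    then show "t \<in> (\<lambda>z. of_int z / 2 ^ R) ` UNIV" by blast
  qed
  then have "countable ?N" by (rule countable_subset) simp
  then show "?N \<in> null_sets I01" by (rule countable_null_I01) auto
  show "{t \<in> space I01. \<not> 2 ^ R * t \<notin> \<int>} \<subseteq> ?N" by auto
qed

lemma measure_Ico_I01:
  assumes "0 \<le> a" "a \<le> b" "b \<le> 1"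
  shows "measure I01 {a..<b} = b - a"
proof -
  have "measure I01 {a..<b} = measure lebesgue {a..<b}"
    using assms by (intro I01_measure) auto
  also have "\<dots> = measure lborel {a..<b}" by (intro measure_completion) simp
  also have "\<dots> = b - a" using assms by simp
  finally show ?thesis .
qed

lemma measure_idx:
  "{t\<in>{0..1}. P (idx R t)} \<in> sets I01 \<and>
   measure I01 {t\<in>{0..1}. P (idx R t)} = real (card {x\<in>{..<2 ^ R}. P x}) / 2 ^ R"
proof -
  define S where "S = {x\<in>{..<2 ^ R}. P x}"
  define A where "A x = {real x / 2 ^ R ..< (real x + 1) / 2 ^ R}" for x :: nat
  define B where "B = (if P (2 ^ R) then {1::real} else {})"
  have idx_eq: "idx R t = x \<longleftrightarrow> t \<in> A x" if "0 \<le> t" for t x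
  proof -
    have "idx R t = x \<longleftrightarrow> \<lfloor>2 ^ R * t\<rfloor> = int x"
      using that by (auto simp: idx_def)
    also have "\<dots> \<longleftrightarrow> real x \<le> 2 ^ R * t \<and> 2 ^ R * t < real x + 1"
      by (simp add: floor_eq_iff)
    also have "\<dots> \<longleftrightarrow> t \<in> A x" by (simp add: A_def field_simps)
    finally show ?thesis .
  qed
  have idx1: "idx R 1 = 2 ^ R" by (simp add: idx_def)
  have idxlt: "idx R t < 2 ^ R" if "0 \<le> t" "t < 1" for t
  proof -
    have "2 ^ R * t < 2 ^ R" using that by simp
    then have "\<lfloor>2 ^ R * t\<rfloor> < 2 ^ R" by (simp add: floor_less_iff)
    then show ?thesis unfolding idx_def using that by (subst nat_less_iff) auto
  qed
  have Asub: "A x \<subseteq> {0..<1}" if "x < 2 ^ R" for x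
  proof -
    have "x + 1 \<le> 2 ^ R" using that by simp
    then have "real (x + 1) \<le> real (2 ^ R)" by (simp only: of_nat_le_iff)
    then have "real x + 1 \<le> 2 ^ R" by simp
    then have "(real x + 1) / 2 ^ R \<le> 1" by simp
    moreover have "0 \<le> real x / 2 ^ R" by simp
    ultimately show ?thesis unfolding A_def by (auto intro: order.trans)
  qed
  have seteq: "{t\<in>{0..1}. P (idx R t)} = (\<Union>x\<in>S. A x) \<union> B"
  proof (intro equalityI subsetI)
    fix t assume t: "t \<in> {t\<in>{0..1}. P (idx R t)}"
    show "t \<in> (\<Union>x\<in>S. A x) \<union> B"
    proof (cases "t = 1")
      case True then show ?thesis using t idx1 by (simp add: B_def)
    next
      case False
      then have "idx R t \<in> S" "t \<in> A (idx R t)" using t idxlt[of t] idx_eq[of t] by (auto simp: S_def)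
      then show ?thesis by blast
    qed
  next
    fix t assume t: "t \<in> (\<Union>x\<in>S. A x) \<union> B"
    show "t \<in> {t\<in>{0..1}. P (idx R t)}"
    proof (cases "t \<in> B")
      case True then show ?thesis using idx1 by (auto simp: B_def split: if_splits)
    next
      case False
      then obtain x where x: "x \<in> S" "t \<in> A x" using t by auto
      then have "t \<in> {0..<1}" using Asub[of x] by (auto simp: S_def)
      moreover have "idx R t = x" using x idx_eq[of t x] \<open>t \<in> {0..<1}\<close> by auto
      ultimately show ?thesis using x by (auto simp: S_def)
    qed
  qed
  have Asets: "A x \<in> sets I01" if "x < 2 ^ R" for x
  proof -
    have s: "A x \<subseteq> {0..1}" using Asub[OF that] by auto
    show ?thesis by (rule I01_sets[OF s]) (simp add: A_def)
  qed
  have Bnull: "B \<in> null_sets I01" by (auto simp: B_def intro: countable_null_I01)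
  have disj: "disjoint_family_on A S"
    unfolding disjoint_family_on_def
  proof (intro ballI impI)
    fix x y assume "x \<in> S" "y \<in> S" "x \<noteq> y"
    show "A x \<inter> A y = {}"
    proof (rule ccontr)
      assume "A x \<inter> A y \<noteq> {}"
      then obtain t where "t \<in> A x" "t \<in> A y" by auto
      moreover have "0 \<le> t"
      proof -
        have "0 \<le> real x / 2 ^ R" by simp
        moreover have "real x / 2 ^ R \<le> t" using \<open>t \<in> A x\<close> by (simp add: A_def)
        ultimately show ?thesis by linarith
      qed
      ultimately show False using idx_eq[of t x] idx_eq[of t y] \<open>x \<noteq> y\<close> by auto
    qed
  qed
  have setsU: "{t\<in>{0..1}. P (idx R t)} \<in> sets I01"
    unfolding seteq using Asets Bnull by (intro sets.Un sets.finite_UN) (auto simp: S_def)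
  have "measure I01 {t\<in>{0..1}. P (idx R t)} = measure I01 (\<Union>x\<in>S. A x)"
    unfolding seteq using Asets Bnull by (intro measure_Un_null_set) (auto simp: S_def)
  also have "\<dots> = (\<Sum>x\<in>S. measure I01 (A x))"
  proof (rule measure_finite_Union)
    show "finite S" by (simp add: S_def)
    show "A ` S \<subseteq> sets I01" using Asets by (auto simp: S_def)
    show "disjoint_family_on A S" by (rule disj)
    fix x assume "x \<in> S"
    then have "A x \<subseteq> {0..<1}" using Asub by (auto simp: S_def)
    then have "A x \<subseteq> {0..1}" by auto
    then have "emeasure I01 (A x) \<le> emeasure I01 {0..1}"
      by (intro emeasure_mono) (auto simp: sets_restrict_space_iff)
    also have "\<dots> < \<infinity>" by (simp add: emeasure_restrict_space)
    finally show "emeasure I01 (A x) \<noteq> \<infinity>" by simp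
  qed
  also have "\<dots> = (\<Sum>x\<in>S. 1 / 2 ^ R)"
  proof (rule sum.cong[OF refl])
    fix x assume "x \<in> S"
    then have "x + 1 \<le> 2 ^ R" by (simp add: S_def)
    then have "real (x + 1) \<le> real (2 ^ R)" by (simp only: of_nat_le_iff)
    then have "real x + 1 \<le> 2 ^ R" by simp
    then show "measure I01 (A x) = 1 / 2 ^ R"
      unfolding A_def by (subst measure_Ico_I01) (auto simp: field_simps)
  qed
  also have "\<dots> = real (card S) / 2 ^ R" by simp
  finally show ?thesis using setsU by (simp add: S_def)
qed



lemma borel_I01: "h \<in> borel_measurable borel \<Longrightarrow> h \<in> borel_measurable I01"
  by (intro measurable_restrict_space1 measurable_completion) simp

lemma walsh_borel: "walsh n \<in> borel_measurable borel"
  unfolding walsh_def rademacher_def by measurable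

definition gJ :: "nat set \<Rightarrow> nat set \<Rightarrow> (nat \<Rightarrow> real) \<Rightarrow> (nat \<Rightarrow> nat) \<Rightarrow> real \<Rightarrow> real" where
  "gJ J K a nn t = (\<Sum>k\<in>K. a k * (-1) ^ card ({i. bit (nn k) i} \<inter> J) * walsh (nn k) t)"

definition GS :: "nat set \<Rightarrow> (nat \<Rightarrow> real) \<Rightarrow> (nat \<Rightarrow> nat) \<Rightarrow> nat set \<Rightarrow> real" where
  "GS K a nn S = (\<Sum>k\<in>K. a k * (-1) ^ card ({i. bit (nn k) i} \<inter> S))"

lemma gJ_borel: "gJ J K a nn \<in> borel_measurable borel"
proof -
  have "(\<lambda>t. \<Sum>k\<in>K. a k * (-1) ^ card ({i. bit (nn k) i} \<inter> J) * walsh (nn k) t) \<in> borel_measurable borel"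
    using walsh_borel by measurable
  then show ?thesis by (simp add: gJ_def[abs_def])
qed

lemma finite_bits: "finite {i. bit (n::nat) i}"
  by (rule finite_subset[of _ "{..<n}"]) (auto dest: bit_lt)

lemma gJ_eq:
  assumes nn: "\<And>k. k \<in> K \<Longrightarrow> nn k < 2 ^ R" and t: "0 \<le> t" and nz: "2 ^ R * t \<notin> \<int>"
  shows "gJ J K a nn t = GS K a nn (sd (dx R (idx R t)) J)"
  unfolding gJ_def GS_def
proof (rule sum.cong[OF refl])
  fix k assume k: "k \<in> K"
  let ?B = "{i. bit (nn k) i}" and ?E = "dx R (idx R t)"
  have fE: "finite ?E" by (auto simp: dx_def)
  have "?B \<inter> sd ?E J = sd (?B \<inter> ?E) (?B \<inter> J)" by (auto simp: sd_def)
  then have "(-1::real) ^ card (?B \<inter> sd ?E J) = (-1) ^ card (?B \<inter> ?E) * (-1) ^ card (?B \<inter> J)"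
    using sd_parity[of "?B \<inter> ?E" "?B \<inter> J"] finite_bits by simp
  then show "a k * (-1) ^ card (?B \<inter> J) * walsh (nn k) t = a k * (-1) ^ card (?B \<inter> sd ?E J)"
    using walsh_dx[OF nn[OF k] t nz] by simp
qed

lemma card_dx: "card {x\<in>{..<2 ^ R}. Q (dx R x)} = card {S\<in>Pow {..<R}. Q S}"
proof -
  have inj: "inj_on (dx R) {x\<in>{..<2 ^ R}. Q (dx R x)}"
    using dx_bij[of R] by (auto simp: bij_betw_def intro: inj_on_subset)
  have "dx R ` {x\<in>{..<2 ^ R}. Q (dx R x)} = {S \<in> dx R ` {..<2 ^ R}. Q S}" by auto
  also have "\<dots> = {S\<in>Pow {..<R}. Q S}"
    using dx_bij[of R] by (simp add: bij_betw_def)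
  finally have "dx R ` {x\<in>{..<2 ^ R}. Q (dx R x)} = {S\<in>Pow {..<R}. Q S}" .
  then show ?thesis using card_image[OF inj] by simp
qed

lemma card_sd:
  assumes "J \<subseteq> U"
  shows "card {S\<in>Pow U. Q (sd S J)} = card {S\<in>Pow U. Q S}"
proof (rule bij_betw_same_card[of "\<lambda>S. sd S J"], rule bij_betw_byWitness[where f'="\<lambda>S. sd S J"])
  show "\<forall>a\<in>{S \<in> Pow U. Q (sd S J)}. sd (sd a J) J = a" by (simp add: sd_sd)
  show "\<forall>a\<in>{S \<in> Pow U. Q S}. sd (sd a J) J = a" by (simp add: sd_sd)
  show "(\<lambda>S. sd S J) ` {S \<in> Pow U. Q (sd S J)} \<subseteq> {S \<in> Pow U. Q S}"
    using assms by (auto simp: sd_def)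
  show "(\<lambda>S. sd S J) ` {S \<in> Pow U. Q S} \<subseteq> {S \<in> Pow U. Q (sd S J)}"
  proof
    fix x assume "x \<in> (\<lambda>S. sd S J) ` {S \<in> Pow U. Q S}"
    then obtain S where S: "S \<in> Pow U" "Q S" "x = sd S J" by auto
    then have "sd x J = S" by (simp add: sd_sd)
    moreover have "x \<subseteq> U" using S assms by (auto simp: sd_def)
    ultimately show "x \<in> {S \<in> Pow U. Q (sd S J)}" using S by simp
  qed
qed

lemma gJ_distr:
  assumes nn: "\<And>k. k \<in> K \<Longrightarrow> nn k < 2 ^ R" and J: "J \<subseteq> {..<R}"
  shows "measure I01 {t\<in>{0..1}. \<bar>gJ J K a nn t\<bar> > s} =
         real (card {S\<in>Pow {..<R}. \<bar>GS K a nn S\<bar> > s}) / 2 ^ R"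
proof -
  let ?Q = "\<lambda>x. \<bar>GS K a nn (sd (dx R x) J)\<bar> > s"
  have m: "{t\<in>{0..1}. ?Q (idx R t)} \<in> sets I01 \<and>
     measure I01 {t\<in>{0..1}. ?Q (idx R t)} = real (card {x\<in>{..<2 ^ R}. ?Q x}) / 2 ^ R"
    by (rule measure_idx)
  have "measure I01 {t\<in>{0..1}. \<bar>gJ J K a nn t\<bar> > s} = measure I01 {t\<in>{0..1}. ?Q (idx R t)}"
  proof (rule measure_eq_AE)
    show "AE t in I01. (t \<in> {t\<in>{0..1}. \<bar>gJ J K a nn t\<bar> > s}) = (t \<in> {t\<in>{0..1}. ?Q (idx R t)})"
      using AE_nondyadic[of R]
    proof (rule AE_mp, intro AE_I2 impI)
      fix t assume t: "t \<in> space I01" "2 ^ R * t \<notin> \<int>"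
      then have "gJ J K a nn t = GS K a nn (sd (dx R (idx R t)) J)"
        using gJ_eq[OF nn] by auto
      then show "(t \<in> {t\<in>{0..1}. \<bar>gJ J K a nn t\<bar> > s}) = (t \<in> {t\<in>{0..1}. ?Q (idx R t)})"
        using t by auto
    qed
    have "gJ J K a nn \<in> borel_measurable I01" by (rule borel_I01[OF gJ_borel])
    then have "{t \<in> space I01. \<bar>gJ J K a nn t\<bar> > s} \<in> sets I01" by measurable
    then show "{t\<in>{0..1}. \<bar>gJ J K a nn t\<bar> > s} \<in> sets I01" by simp
    show "{t\<in>{0..1}. ?Q (idx R t)} \<in> sets I01" using m by simp
  qed
  also have "\<dots> = real (card {x\<in>{..<2 ^ R}. ?Q x}) / 2 ^ R" using m by simp
  also have "card {x\<in>{..<2 ^ R}. ?Q x} = card {S\<in>Pow {..<R}. \<bar>GS K a nn (sd S J)\<bar> > s}"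
    by (rule card_dx)
  also have "\<dots> = card {S\<in>Pow {..<R}. \<bar>GS K a nn S\<bar> > s}"
    using J by (rule card_sd)
  finally show ?thesis .
qed

lemma gJ_equi:
  assumes nn: "\<And>k. k \<in> K \<Longrightarrow> nn k < 2 ^ R" and J: "J \<subseteq> {..<R}" and J': "J' \<subseteq> {..<R}"
  shows "equimeasurable (gJ J K a nn) (gJ J' K a nn)"
  unfolding equimeasurable_def using gJ_distr[OF nn J] gJ_distr[OF nn J'] by simp



lemma bfs_zero:
  assumes "banach_function_space X nrm"
  shows "(\<lambda>_. 0) \<in> X \<and> nrm (\<lambda>_. 0) = 0"
  using assms unfolding banach_function_space_def by auto

lemma bfs_sum:
  assumes B: "banach_function_space X nrm" and I: "finite I" and h: "\<And>i. i \<in> I \<Longrightarrow> h i \<in> X"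
  shows "(\<lambda>t. \<Sum>i\<in>I. h i t) \<in> X \<and> nrm (\<lambda>t. \<Sum>i\<in>I. h i t) \<le> (\<Sum>i\<in>I. nrm (h i))"
  using I h
proof (induction I rule: finite_induct)
  case empty
  then show ?case using bfs_zero[OF B] by simp
next
  case (insert x F)
  have hx: "h x \<in> X" using insert by simp
  have IH: "(\<lambda>t. \<Sum>i\<in>F. h i t) \<in> X \<and> nrm (\<lambda>t. \<Sum>i\<in>F. h i t) \<le> (\<Sum>i\<in>F. nrm (h i))"
    using insert by simp
  have add: "\<forall>f\<in>X. \<forall>g\<in>X. (\<lambda>x. f x + g x) \<in> X"
    and tri: "\<forall>f\<in>X. \<forall>g\<in>X. nrm (\<lambda>x. f x + g x) \<le> nrm f + nrm g"
    using B unfolding banach_function_space_def by blast+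
  have eq: "(\<lambda>t. \<Sum>i\<in>insert x F. h i t) = (\<lambda>t. h x t + (\<Sum>i\<in>F. h i t))"
    using insert by simp
  have "(\<lambda>t. h x t + (\<Sum>i\<in>F. h i t)) \<in> X"
    using add[rule_format, OF hx conjunct1[OF IH]] by simp
  moreover have "nrm (\<lambda>t. h x t + (\<Sum>i\<in>F. h i t)) \<le> nrm (h x) + nrm (\<lambda>t. \<Sum>i\<in>F. h i t)"
    using tri[rule_format, OF hx conjunct1[OF IH]] by simp
  ultimately show ?case unfolding eq using IH insert by simp
qed

lemma bfs_avg:
  assumes B: "banach_function_space X nrm" and A: "finite A"
    and g: "\<And>J. J \<in> A \<Longrightarrow> g J \<in> X \<and> nrm (g J) \<le> c"
  shows "(\<lambda>t. \<Sum>J\<in>A. w J * g J t) \<in> X \<and> nrm (\<lambda>t. \<Sum>J\<in>A. w J * g J t) \<le> (\<Sum>J\<in>A. \<bar>w J\<bar>) * c"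
proof -
  have sc: "\<forall>c. \<forall>f\<in>X. (\<lambda>x. c * f x) \<in> X" and hom: "\<forall>c. \<forall>f\<in>X. nrm (\<lambda>x. c * f x) = \<bar>c\<bar> * nrm f"
    using B unfolding banach_function_space_def by blast+
  have hX: "(\<lambda>t. w J * g J t) \<in> X" if "J \<in> A" for J
    using sc[rule_format, OF conjunct1[OF g[OF that]], of "w J"] by simp
  have hn: "nrm (\<lambda>t. w J * g J t) \<le> \<bar>w J\<bar> * c" if "J \<in> A" for J
    using hom[rule_format, OF conjunct1[OF g[OF that]], of "w J"] g[OF that] by (simp add: mult_left_mono)
  from bfs_sum[OF B A, of "\<lambda>J t. w J * g J t"] hX
  have "(\<lambda>t. \<Sum>J\<in>A. w J * g J t) \<in> X \<and> nrm (\<lambda>t. \<Sum>J\<in>A. w J * g J t) \<le> (\<Sum>J\<in>A. nrm (\<lambda>t. w J * g J t))"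
    by blast
  moreover have "(\<Sum>J\<in>A. nrm (\<lambda>t. w J * g J t)) \<le> (\<Sum>J\<in>A. \<bar>w J\<bar> * c)"
    by (rule sum_mono) (rule hn)
  ultimately show ?thesis by (simp add: sum_distrib_right)
qed

lemma gJ_sum_swap:
  "(\<Sum>J\<in>A. w J * gJ J K a nn t) =
   (\<Sum>k\<in>K. a k * (\<Sum>J\<in>A. w J * (-1) ^ card ({i. bit (nn k) i} \<inter> J)) * walsh (nn k) t)"
  unfolding gJ_def by (simp add: sum_distrib_left sum_distrib_right sum.swap[of _ A] mult_ac)

lemma key_avg:
  assumes RI: "rearrangement_invariant X nrm" and fX: "gJ {} K a nn \<in> X"
    and nn: "\<And>k. k \<in> K \<Longrightarrow> nn k < 2 ^ R" and U: "U \<subseteq> {..<R}"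
  shows "(\<lambda>t. \<Sum>k\<in>K. a k * (\<Sum>J\<in>Pow U. w J * (-1) ^ card ({i. bit (nn k) i} \<inter> J)) * walsh (nn k) t) \<in> X \<and>
         nrm (\<lambda>t. \<Sum>k\<in>K. a k * (\<Sum>J\<in>Pow U. w J * (-1) ^ card ({i. bit (nn k) i} \<inter> J)) * walsh (nn k) t)
           \<le> (\<Sum>J\<in>Pow U. \<bar>w J\<bar>) * nrm (gJ {} K a nn)"
proof -
  have B: "banach_function_space X nrm" using RI by (simp add: rearrangement_invariant_def)
  have fU: "finite U" using U finite_subset by blast
  have g: "gJ J K a nn \<in> X \<and> nrm (gJ J K a nn) \<le> nrm (gJ {} K a nn)" if J: "J \<in> Pow U" for J
  proof -
    have J': "J \<subseteq> {..<R}" using J U by auto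
    have "equimeasurable (gJ J K a nn) (gJ {} K a nn)"
      by (rule gJ_equi[OF nn J']) auto
    moreover have "gJ J K a nn \<in> borel_measurable I01" "gJ {} K a nn \<in> borel_measurable I01"
      by (rule borel_I01[OF gJ_borel])+
    ultimately have "(gJ J K a nn \<in> X \<longleftrightarrow> gJ {} K a nn \<in> X) \<and> (gJ J K a nn \<in> X \<longrightarrow> nrm (gJ J K a nn) = nrm (gJ {} K a nn))"
      using RI unfolding rearrangement_invariant_def by blast
    then show ?thesis using fX by simp
  qed
  from bfs_avg[where A="Pow U" and w=w and g="\<lambda>J. gJ J K a nn", OF B _ g] fU
  show ?thesis by (simp add: gJ_sum_swap)
qed

lemma bits_high_empty:
  assumes "(n::nat) < 2 ^ R" "m \<le> R"
  shows "({i. bit n i} \<inter> {m..<R} = {}) \<longleftrightarrow> n < 2 ^ m"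
proof
  assume h: "{i. bit n i} \<inter> {m..<R} = {}"
  have "take_bit m n = n"
  proof (rule bit_eqI)
    fix i
    show "bit (take_bit m n) i = bit n i"
    proof (cases "i < m")
      case False
      then have "\<not> bit n i" using h bit_ge_false[OF assms(1), of i] by (cases "i < R") auto
      then show ?thesis by (simp add: bit_take_bit_iff)
    qed (simp add: bit_take_bit_iff)
  qed
  then show "n < 2 ^ m" by (metis take_bit_nat_less_exp)
next
  assume "n < 2 ^ m"
  then show "{i. bit n i} \<inter> {m..<R} = {}" using bit_ge_false[of n m] by auto
qed

lemma bits_sub: "(n::nat) < 2 ^ R \<Longrightarrow> {i. bit n i} \<subseteq> {..<R}"
  using bit_ge_false[of n R] by (auto simp: not_less[symmetric])

lemma partial_avg:
  assumes RI: "rearrangement_invariant X nrm" and fX: "gJ {} K a nn \<in> X"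
    and nn: "\<And>k. k \<in> K \<Longrightarrow> nn k < 2 ^ R" and m: "m \<le> R" and fK: "finite K"
  shows "(\<lambda>t. \<Sum>k\<in>{k\<in>K. nn k < 2 ^ m}. a k * walsh (nn k) t) \<in> X \<and>
         nrm (\<lambda>t. \<Sum>k\<in>{k\<in>K. nn k < 2 ^ m}. a k * walsh (nn k) t) \<le> nrm (gJ {} K a nn)"
proof -
  define U where "U = {m..<R}"
  define w where "w J = (1::real) / 2 ^ card U" for J :: "nat set"
  have U: "U \<subseteq> {..<R}" by (auto simp: U_def)
  have inner: "(\<Sum>J\<in>Pow U. w J * (-1) ^ card ({i. bit (nn k) i} \<inter> J)) = (if nn k < 2 ^ m then 1 else 0)"
    if k: "k \<in> K" for k
  proof -
    have "(\<Sum>J\<in>Pow U. w J * (-1) ^ card ({i. bit (nn k) i} \<inter> J)) =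
          (1 / 2 ^ card U) * (\<Sum>J\<in>Pow U. (-1) ^ card ({i. bit (nn k) i} \<inter> J))"
      by (simp add: w_def sum_distrib_left)
    also have "\<dots> = (1 / 2 ^ card U) * (if {i. bit (nn k) i} \<inter> U = {} then 2 ^ card U else 0)"
      by (subst char_orth) (auto simp: U_def finite_bits)
    also have "\<dots> = (if nn k < 2 ^ m then 1 else 0)"
      using bits_high_empty[OF nn[OF k] m] by (simp add: U_def)
    finally show ?thesis .
  qed
  have wsum: "(\<Sum>J\<in>Pow U. \<bar>w J\<bar>) = 1"
    by (simp add: w_def card_Pow U_def)
  have fun_eq: "(\<lambda>t. \<Sum>k\<in>K. a k * (\<Sum>J\<in>Pow U. w J * (-1) ^ card ({i. bit (nn k) i} \<inter> J)) * walsh (nn k) t) =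
        (\<lambda>t. \<Sum>k\<in>{k\<in>K. nn k < 2 ^ m}. a k * walsh (nn k) t)"
  proof
    fix t
    have "(\<Sum>k\<in>K. a k * (\<Sum>J\<in>Pow U. w J * (-1) ^ card ({i. bit (nn k) i} \<inter> J)) * walsh (nn k) t) =
          (\<Sum>k\<in>K. if nn k < 2 ^ m then a k * walsh (nn k) t else 0)"
      by (rule sum.cong[OF refl]) (simp add: inner)
    also have "\<dots> = (\<Sum>k\<in>{k\<in>K. nn k < 2 ^ m}. a k * walsh (nn k) t)"
      using sum.inter_filter[OF fK, of "\<lambda>k. a k * walsh (nn k) t" "\<lambda>k. nn k < 2 ^ m"] by simp
    finally show "(\<Sum>k\<in>K. a k * (\<Sum>J\<in>Pow U. w J * (-1) ^ card ({i. bit (nn k) i} \<inter> J)) * walsh (nn k) t) =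
        (\<Sum>k\<in>{k\<in>K. nn k < 2 ^ m}. a k * walsh (nn k) t)" .
  qed
  show ?thesis using key_avg[OF RI fX nn U, of w] unfolding fun_eq wsum by simp
qed



lemma gJ_empty: "gJ {} K a nn = (\<lambda>t. \<Sum>k\<in>K. a k * walsh (nn k) t)"
  by (simp add: gJ_def[abs_def])

lemma extract_avg:
  assumes RI: "rearrangement_invariant X nrm" and fX: "gJ {} K a nn \<in> X"
    and nn: "\<And>k. k \<in> K \<Longrightarrow> nn k < 2 ^ R" and inj: "inj_on nn K" and k0: "k0 \<in> K" and fK: "finite K"
  shows "(\<lambda>t. a k0 * walsh (nn k0) t) \<in> X \<and> nrm (\<lambda>t. a k0 * walsh (nn k0) t) \<le> nrm (gJ {} K a nn)"
proof -
  define U where "U = {..<R}"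
  define B0 where "B0 = {i. bit (nn k0) i}"
  define w where "w J = (-1::real) ^ card (B0 \<inter> J) / 2 ^ R" for J :: "nat set"
  have U: "U \<subseteq> {..<R}" by (auto simp: U_def)
  have inner: "(\<Sum>J\<in>Pow U. w J * (-1) ^ card ({i. bit (nn k) i} \<inter> J)) = (if k = k0 then 1 else 0)"
    if k: "k \<in> K" for k
  proof -
    let ?Bk = "{i. bit (nn k) i}"
    have "(\<Sum>J\<in>Pow U. w J * (-1) ^ card (?Bk \<inter> J)) =
          (\<Sum>J\<in>Pow U. (1 / 2 ^ R) * (-1) ^ card (sd B0 ?Bk \<inter> J))"
    proof (rule sum.cong[OF refl])
      fix J
      have "sd B0 ?Bk \<inter> J = sd (B0 \<inter> J) (?Bk \<inter> J)" by (auto simp: sd_def)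
      then have "(-1::real) ^ card (sd B0 ?Bk \<inter> J) = (-1) ^ card (B0 \<inter> J) * (-1) ^ card (?Bk \<inter> J)"
        using sd_parity[of "B0 \<inter> J" "?Bk \<inter> J"] finite_bits by (simp add: B0_def)
      then show "w J * (-1) ^ card (?Bk \<inter> J) = (1 / 2 ^ R) * (-1) ^ card (sd B0 ?Bk \<inter> J)"
        by (simp add: w_def)
    qed
    also have "\<dots> = (1 / 2 ^ R) * (\<Sum>J\<in>Pow U. (-1) ^ card (sd B0 ?Bk \<inter> J))"
      by (simp add: sum_distrib_left)
    also have "\<dots> = (1 / 2 ^ R) * (if sd B0 ?Bk \<inter> U = {} then 2 ^ card U else 0)"
      by (subst char_orth) (auto simp: U_def sd_def B0_def finite_bits)
    also have "\<dots> = (if k = k0 then 1 else 0)"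
    proof -
      have s0: "B0 \<subseteq> {..<R}" using bits_sub[OF nn[OF k0]] by (simp add: B0_def)
      have sk: "?Bk \<subseteq> {..<R}" using bits_sub[OF nn[OF k]] by simp
      have "sd B0 ?Bk \<inter> U = {} \<longleftrightarrow> B0 = ?Bk" using s0 sk by (auto simp: sd_def U_def)
      also have "\<dots> \<longleftrightarrow> nn k0 = nn k"
      proof
        assume "B0 = ?Bk"
        then show "nn k0 = nn k" by (intro bit_eqI) (auto simp: B0_def set_eq_iff)
      qed (simp add: B0_def)
      also have "\<dots> \<longleftrightarrow> k = k0" using inj k k0 by (auto simp: inj_on_def)
      finally show ?thesis by (simp add: U_def)
    qed
    finally show ?thesis .
  qed
  have wsum: "(\<Sum>J\<in>Pow U. \<bar>w J\<bar>) = 1"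
    by (simp add: w_def card_Pow U_def abs_mult power_abs)
  have fun_eq: "(\<lambda>t. \<Sum>k\<in>K. a k * (\<Sum>J\<in>Pow U. w J * (-1) ^ card ({i. bit (nn k) i} \<inter> J)) * walsh (nn k) t) =
        (\<lambda>t. a k0 * walsh (nn k0) t)"
  proof
    fix t
    have "(\<Sum>k\<in>K. a k * (\<Sum>J\<in>Pow U. w J * (-1) ^ card ({i. bit (nn k) i} \<inter> J)) * walsh (nn k) t) =
          (\<Sum>k\<in>K. if k = k0 then a k * walsh (nn k) t else 0)"
      by (rule sum.cong[OF refl]) (simp add: inner)
    also have "\<dots> = a k0 * walsh (nn k0) t" using fK k0 by simp
    finally show "(\<Sum>k\<in>K. a k * (\<Sum>J\<in>Pow U. w J * (-1) ^ card ({i. bit (nn k) i} \<inter> J)) * walsh (nn k) t) =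
        a k0 * walsh (nn k0) t" .
  qed
  show ?thesis using key_avg[OF RI fX nn U, of w] unfolding fun_eq wsum by simp
qed

lemma abs_rad: "\<bar>rademacher k t\<bar> \<le> 1"
  by (simp add: rademacher_def abs_sgn_eq)

lemma abs_walsh: "\<bar>walsh n t\<bar> \<le> 1"
  unfolding walsh_def abs_prod by (rule prod_le_1) (auto simp: abs_rad)



theorem proposition4p2:
  fixes X :: "(real \<Rightarrow> real) set" and nrm :: "(real \<Rightarrow> real) \<Rightarrow> real"
    and q :: real and n :: "nat \<Rightarrow> nat"
  assumes "rearrangement_invariant X nrm"
    and "interpolation_space_L1_Linf X nrm"
    and "q > 1" and "lacunary q n"
  shows "\<exists>K>0. \<forall>M N (a :: nat \<Rightarrow> real). M < N \<longrightarrow>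
           nrm (\<lambda>t. \<Sum>k=1..M. a k * walsh (n k) t)
             \<le> K * nrm (\<lambda>t. \<Sum>k=1..N. a k * walsh (n k) t)"
proof -
  note RI = assms(1)
  have B: "banach_function_space X nrm" using RI by (simp add: rearrangement_invariant_def)
  obtain C0 where C0: "\<And>f c. f \<in> borel_measurable I01 \<Longrightarrow> ess_bdd f c \<Longrightarrow> f \<in> X"
    using assms(2) unfolding interpolation_space_L1_Linf_def by blast
  have npos: "n k > 0" if "k \<ge> 1" for k
  proof (rule ccontr)
    assume "\<not> n k > 0"
    then have "n k = 0" by simp
    then have "real (n (Suc k)) / real (n k) = 0" by simp
    moreover have "real (n (Suc k)) / real (n k) \<ge> q" using assms(4) that by (simp add: lacunary_def)
    ultimately show False using assms(3) by linarith
  qed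
  have grow: "real (n (Suc k)) \<ge> q * real (n k)" if "k \<ge> 1" for k
  proof -
    have "real (n (Suc k)) / real (n k) \<ge> q" using assms(4) that by (simp add: lacunary_def)
    then show ?thesis using npos[OF that] by (simp add: le_divide_eq)
  qed
  have step: "n k < n (Suc k)" if "k \<ge> 1" for k
  proof -
    have "real (n k) < q * real (n k)" using npos[OF that] assms(3) by simp
    then show ?thesis using grow[OF that] by simp
  qed
  have mono_lt: "n j < n k" if "1 \<le> j" "j < k" for j k
    using that
  proof (induction k)
    case 0 then show ?case by simp
  next
    case (Suc k)
    show ?case
    proof (cases "j = k")
      case True
      then show ?thesis using step[of k] Suc.prems by simp
    next
      case False
      then have "j < k" using Suc.prems by simp
      then have "n j < n k" using Suc.IH Suc.prems by simp
      also have "n k < n (Suc k)" using step[of k] \<open>j < k\<close> Suc.prems by simp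
      finally show ?thesis .
    qed
  qed
  have mono_le: "n j \<le> n k" if "1 \<le> j" "j \<le> k" for j k
    using mono_lt[of j k] that by (cases "j = k") auto
  have geo: "real (n (k + d)) \<ge> q ^ d * real (n k)" if "k \<ge> 1" for k d
  proof (induction d)
    case 0 then show ?case by simp
  next
    case (Suc d)
    have "q ^ Suc d * real (n k) = q * (q ^ d * real (n k))" by simp
    also have "\<dots> \<le> q * real (n (k + d))" using Suc assms(3) by simp
    also have "\<dots> \<le> real (n (Suc (k + d)))" using grow[of "k + d"] that by simp
    finally show ?case by simp
  qed
  obtain L where L: "2 < q ^ L" using real_arch_pow[OF assms(3)] by blast
  have L1: "L \<ge> 1" using L by (cases L) auto
  show ?thesis
  proof (intro exI[of _ "real L"] conjI allI impI)
    show "real L > 0" using L1 by simp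
    fix M N :: nat and a :: "nat \<Rightarrow> real"
    assume MN: "M < N"
    define f where "f = (\<lambda>t. \<Sum>k=1..N. a k * walsh (n k) t)"
    have fmeas: "f \<in> borel_measurable I01"
      unfolding f_def using walsh_borel by (intro borel_I01) measurable
    have fbd: "ess_bdd f (\<Sum>k=1..N. \<bar>a k\<bar>)"
    proof -
      have "\<bar>f t\<bar> \<le> (\<Sum>k=1..N. \<bar>a k\<bar>)" for t
      proof -
        have "\<bar>f t\<bar> \<le> (\<Sum>k=1..N. \<bar>a k * walsh (n k) t\<bar>)" unfolding f_def by (rule sum_abs)
        also have "\<dots> \<le> (\<Sum>k=1..N. \<bar>a k\<bar>)"
          by (rule sum_mono) (simp add: abs_mult mult_left_le abs_walsh)
        finally show ?thesis .
      qed
      then show ?thesis by (simp add: ess_bdd_def)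
    qed
    have fX: "f \<in> X" using C0[OF fmeas fbd] .
    have fg: "gJ {} {1..N} a n = f" by (simp add: gJ_empty f_def)
    have nrmf: "nrm f \<ge> 0" using B fX unfolding banach_function_space_def by blast
    have main: "nrm (\<lambda>t. \<Sum>k=1..M. a k * walsh (n k) t) \<le> real L * nrm f"
    proof (cases "M = 0")
      case True
      then show ?thesis using bfs_zero[OF B] nrmf by simp
    next
      case False
      then have M1: "M \<ge> 1" by simp
      define m where "m = (LEAST m. n M < 2 ^ m)"
      have ex: "n M < 2 ^ (n M)" by (rule less_exp)
      have m1: "n M < 2 ^ m" unfolding m_def by (rule LeastI[of _ "n M"]) (rule ex)
      have m2: "2 ^ m \<le> 2 * n M"
      proof (cases m)
        case 0
        then show ?thesis using m1 npos[OF M1] by simp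
      next
        case (Suc m')
        have "\<not> n M < 2 ^ m'" using not_less_Least[of m' "\<lambda>m. n M < 2 ^ m"] Suc m_def by simp
        then show ?thesis using Suc by simp
      qed
      define R where "R = m + n N"
      have nnR: "n k < 2 ^ R" if "k \<in> {1..N}" for k
      proof -
        have "n k \<le> n N" using that mono_le by auto
        also have "n N < 2 ^ n N" by (rule less_exp)
        also have "(2::nat) ^ n N \<le> 2 ^ R" by (simp add: R_def)
        finally show ?thesis .
      qed
      have mR: "m \<le> R" by (simp add: R_def)
      have injn: "inj_on n {1..N}"
      proof (rule inj_onI)
        fix x y assume "x \<in> {1..N}" "y \<in> {1..N}" "n x = n y"
        then show "x = y" using mono_lt[of x y] mono_lt[of y x] by (cases "x < y"; cases "y < x") auto
      qed
      define A where "A = {k\<in>{1..N}. n k < 2 ^ m}"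
      have PA: "(\<lambda>t. \<Sum>k\<in>A. a k * walsh (n k) t) \<in> X \<and> nrm (\<lambda>t. \<Sum>k\<in>A. a k * walsh (n k) t) \<le> nrm f"
        using partial_avg[where K="{1..N}" and nn=n and a=a and R=R and m=m, OF RI _ nnR mR] fX fg by (simp add: A_def)
      have EX: "(\<lambda>t. a k * walsh (n k) t) \<in> X \<and> nrm (\<lambda>t. a k * walsh (n k) t) \<le> nrm f" if "k \<in> {1..N}" for k
        using extract_avg[where K="{1..N}" and nn=n and a=a and R=R, OF RI _ nnR injn that] fX fg by simp
      have sub: "{1..M} \<subseteq> A"
      proof
        fix k assume k: "k \<in> {1..M}"
        then have "n k \<le> n M" using mono_le by auto
        then show "k \<in> A" using k m1 MN by (auto simp: A_def)
      qed
      define D where "D = A - {1..M}"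
      have Dsub: "D \<subseteq> {M<..<M + L}"
      proof
        fix k assume k: "k \<in> D"
        then have kA: "k \<in> A" and kM: "M < k" by (auto simp: D_def A_def)
        have "k < M + L"
        proof (rule ccontr)
          assume "\<not> k < M + L"
          then have "k = M + (k - M)" "k - M \<ge> L" by auto
          then obtain d where d: "k = M + d" "d \<ge> L" by blast
          have "q ^ L \<le> q ^ d" using d assms(3) by (intro power_increasing) auto
          then have "2 * real (n M) < q ^ d * real (n M)" using L npos[OF M1] by simp
          also have "\<dots> \<le> real (n k)" using geo[OF M1, of d] d by simp
          finally have "2 * n M < n k" by linarith
          then show False using m2 kA by (simp add: A_def)
        qed
        then show "k \<in> {M<..<M + L}" using kM by simp
      qed
      have cardD: "card D \<le> L - 1"
      proof -
        have "card D \<le> card {M<..<M + L}" using Dsub by (intro card_mono) auto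
        then show ?thesis by simp
      qed
      have DN: "D \<subseteq> {1..N}" by (auto simp: D_def A_def)
      have fD: "finite D" using DN finite_subset by blast
      have hX: "(\<lambda>t. -1 * (a k * walsh (n k) t)) \<in> X \<and> nrm (\<lambda>t. -1 * (a k * walsh (n k) t)) \<le> nrm f"
        if "k \<in> D" for k
      proof -
        have e: "(\<lambda>t. a k * walsh (n k) t) \<in> X \<and> nrm (\<lambda>t. a k * walsh (n k) t) \<le> nrm f"
          using EX DN that by blast
        have sc: "\<forall>c. \<forall>f\<in>X. (\<lambda>x. c * f x) \<in> X" and hom: "\<forall>c. \<forall>f\<in>X. nrm (\<lambda>x. c * f x) = \<bar>c\<bar> * nrm f"
          using B unfolding banach_function_space_def by blast+
        have "(\<lambda>t. -1 * (a k * walsh (n k) t)) \<in> X"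
          using sc[rule_format, OF conjunct1[OF e], of "-1"] by simp
        moreover have "nrm (\<lambda>t. -1 * (a k * walsh (n k) t)) = \<bar>-1\<bar> * nrm (\<lambda>t. a k * walsh (n k) t)"
          using hom[rule_format, OF conjunct1[OF e], of "-1"] by simp
        ultimately show ?thesis using e by simp
      qed
      have SD: "(\<lambda>t. \<Sum>k\<in>D. -1 * (a k * walsh (n k) t)) \<in> X \<and>
                nrm (\<lambda>t. \<Sum>k\<in>D. -1 * (a k * walsh (n k) t)) \<le> (\<Sum>k\<in>D. nrm (\<lambda>t. -1 * (a k * walsh (n k) t)))"
        by (rule bfs_sum[OF B fD]) (use hX in blast)
      have SD2: "(\<Sum>k\<in>D. nrm (\<lambda>t. -1 * (a k * walsh (n k) t))) \<le> real (card D) * nrm f"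
        using sum_mono[of D "\<lambda>k. nrm (\<lambda>t. -1 * (a k * walsh (n k) t))" "\<lambda>_. nrm f"] hX by simp
      have fA: "finite A" by (simp add: A_def)
      have Seq: "(\<lambda>t. \<Sum>k=1..M. a k * walsh (n k) t) =
                 (\<lambda>t. (\<Sum>k\<in>A. a k * walsh (n k) t) + (\<Sum>k\<in>D. -1 * (a k * walsh (n k) t)))"
      proof
        fix t
        have "(\<Sum>k\<in>A. a k * walsh (n k) t) = (\<Sum>k\<in>D. a k * walsh (n k) t) + (\<Sum>k=1..M. a k * walsh (n k) t)"
          unfolding D_def using sum.subset_diff[OF sub fA] by simp
        then show "(\<Sum>k=1..M. a k * walsh (n k) t) =
                   (\<Sum>k\<in>A. a k * walsh (n k) t) + (\<Sum>k\<in>D. -1 * (a k * walsh (n k) t))"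
          by (simp add: sum_negf)
      qed
      have tri: "\<forall>f\<in>X. \<forall>g\<in>X. nrm (\<lambda>x. f x + g x) \<le> nrm f + nrm g"
        using B unfolding banach_function_space_def by blast
      have "nrm (\<lambda>t. \<Sum>k=1..M. a k * walsh (n k) t) \<le>
            nrm (\<lambda>t. \<Sum>k\<in>A. a k * walsh (n k) t) + nrm (\<lambda>t. \<Sum>k\<in>D. -1 * (a k * walsh (n k) t))"
        unfolding Seq using tri[rule_format, OF conjunct1[OF PA] conjunct1[OF SD]] by simp
      also have "\<dots> \<le> nrm f + real (card D) * nrm f" using PA SD SD2 by linarith
      also have "\<dots> = (1 + real (card D)) * nrm f" by (simp add: algebra_simps)
      also have "\<dots> \<le> real L * nrm f"
      proof (rule mult_right_mono[OF _ nrmf])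
        show "1 + real (card D) \<le> real L" using cardD L1 by linarith
      qed
      finally show ?thesis .
    qed
    then show "nrm (\<lambda>t. \<Sum>k=1..M. a k * walsh (n k) t) \<le> real L * nrm (\<lambda>t. \<Sum>k=1..N. a k * walsh (n k) t)"
      by (simp add: f_def)
  qed
qed


end
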